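(* On a consistent L$^2$TS $(S,L,\to)$, the relations $\approx_L$ and $=_T^{\lambda}$ coincide: for all $s,t\in S$, $s\approx_L t$ iff $s=_T^{\lambda}t$.
   Context: Fix a set $\mathrm{Act}$ of actions containing a special action $\tau$ and a set $\mathbf{AP}$ of atomic propositions. An L$^2$TS is a triple $(S,L,\to)$ with $L:S\to\mathcal{P}(\mathbf{AP})$ and $\to\subseteq S\times\mathrm{Act}\times S$. It is consistent if (i) $s\xrightarrow{a}t$ implies ($L(s)=L(t)$ iff $a=\tau$); (ii) $s\xrightarrow{a}t$, $s'\xrightarrow{a}t'$ and $L(s)=L(s')$ imply $L(t)=L(t')$; (iii) $s\xrightarrow{a}t$, $s'\xrightarrow{b}t'$, $L(s)=L(s')$ and $L(t)=L(t')$ imply $a=b$. Its associated Kripke structure is $(S,L,\{(s,t)\mid\exists a.\ s\xrightarrow{a}t\})$ and its associated LTS is $(S,\to)$. In the associated Kripke structure, paths are sequences of states $s_0,s_1,\dots$ with consecutive states related, maximal if infinite or ending in a state without successor; $L(\pi)$ is obtained from $L(s_0),L(s_1),\dots$ by contracting maximal (finite or infinite) blocks of equal consecutive entries to one entry; $s\approx_L t$ iff $s$ and $t$ have the same sets $\{L(\pi)\mid\pi$ a maximal path from the state$\}$. In the associated LTS, paths are alternating sequences $s_0,a_1,s_1,\dots$ with $s_{k-1}\xrightarrow{a_k}s_k$, maximal if infinite or ending in a state without outgoing transitions. With the trivial colouring $\mathbf{T}$ assigning a single colour $C$ to every state, $\mathbf{T}(\pi)$ is obtained from $C,a_1,C,a_2,\dots$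 by contracting every finite maximal consecutive subsequence $C,\tau,C,\dots,\tau,C$ and every infinite one $C,\tau,C,\tau,\dots$ to $C$; these are complete $\mathbf{T}$-coloured traces of $s$ when $\pi$ is a maximal path from $s$. On the L$^2$TS, $s=_T^{\lambda}t$ means $L(s)=L(t)$ and $s,t$ have the same complete $\mathbf{T}$-coloured traces in the associated LTS. *)

theory Defs
  imports Main
begin

text \<open>Finite or infinite nonempty-or-empty sequences are represented as
  functions nat => 'x option whose domain is a prefix of the naturals.\<close>

definition seq_wf :: "(nat \<Rightarrow> 'x option) \<Rightarrow> bool" where
  "seq_wf w \<longleftrightarrow> (\<forall>i j. j \<le> i \<longrightarrow> w i \<noteq> None \<longrightarrow> w j \<noteq> None)"

definition consistent ::
  "'act \<Rightarrow> ('s \<Rightarrow> 'ap set) \<Rightarrow> ('s \<Rightarrow> 'act \<Rightarrow> 's \<Rightarrow> bool) \<Rightarrow> bool" where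
  "consistent tau L tr \<longleftrightarrow>
     (\<forall>s a t. tr s a t \<longrightarrow> (L s = L t \<longleftrightarrow> a = tau)) \<and>
     (\<forall>s a t s' t'. tr s a t \<longrightarrow> tr s' a t' \<longrightarrow> L s = L s' \<longrightarrow> L t = L t') \<and>
     (\<forall>s a t s' b t'. tr s a t \<longrightarrow> tr s' b t' \<longrightarrow> L s = L s' \<longrightarrow> L t = L t' \<longrightarrow> a = b)"

definition ksucc :: "('s \<Rightarrow> 'act \<Rightarrow> 's \<Rightarrow> bool) \<Rightarrow> 's \<Rightarrow> 's \<Rightarrow> bool" where
  "ksucc tr s t \<longleftrightarrow> (\<exists>a. tr s a t)"

definition kripke_maxpath ::
  "('s \<Rightarrow> 'act \<Rightarrow> 's \<Rightarrow> bool) \<Rightarrow> 's \<Rightarrow> (nat \<Rightarrow> 's option) \<Rightarrow> bool" where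
  "kripke_maxpath tr s p \<longleftrightarrow> seq_wf p \<and> p 0 = Some s \<and>
     (\<forall>i u v. p i = Some u \<longrightarrow> p (Suc i) = Some v \<longrightarrow> ksucc tr u v) \<and>
     (\<forall>i u. p i = Some u \<longrightarrow> p (Suc i) = None \<longrightarrow> (\<nexists>v. ksucc tr u v))"

text \<open>v is obtained from w by contracting every maximal (finite or infinite)
  block of equal consecutive entries to one entry: h maps positions of w onto
  positions of v, staying put exactly when the entry repeats.\<close>

definition stutter_contract :: "(nat \<Rightarrow> 'x option) \<Rightarrow> (nat \<Rightarrow> 'x option) \<Rightarrow> bool" where
  "stutter_contract w v \<longleftrightarrow> seq_wf v \<and>
     (\<exists>h. h 0 = 0 \<and>
        (\<forall>i. w i \<noteq> None \<longrightarrow> v (h i) = w i) \<and>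
        (\<forall>i. w (Suc i) \<noteq> None \<longrightarrow>
              (if w (Suc i) = w i then h (Suc i) = h i else h (Suc i) = Suc (h i))) \<and>
        (\<forall>k. v k \<noteq> None \<longrightarrow> (\<exists>i. w i \<noteq> None \<and> h i = k)))"

definition label_traces ::
  "('s \<Rightarrow> 'ap set) \<Rightarrow> ('s \<Rightarrow> 'act \<Rightarrow> 's \<Rightarrow> bool) \<Rightarrow> 's \<Rightarrow> (nat \<Rightarrow> 'ap set option) set" where
  "label_traces L tr s =
     {v. \<exists>p. kripke_maxpath tr s p \<and> stutter_contract (\<lambda>i. map_option L (p i)) v}"

definition approx_L ::
  "('s \<Rightarrow> 'ap set) \<Rightarrow> ('s \<Rightarrow> 'act \<Rightarrow> 's \<Rightarrow> bool) \<Rightarrow> 's \<Rightarrow> 's \<Rightarrow> bool" where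
  "approx_L L tr s t \<longleftrightarrow> label_traces L tr s = label_traces L tr t"

definition lts_maxpath ::
  "('s \<Rightarrow> 'act \<Rightarrow> 's \<Rightarrow> bool) \<Rightarrow> 's \<Rightarrow> (nat \<Rightarrow> 's option) \<Rightarrow> (nat \<Rightarrow> 'act) \<Rightarrow> bool" where
  "lts_maxpath tr s p a \<longleftrightarrow> seq_wf p \<and> p 0 = Some s \<and>
     (\<forall>i u v. p i = Some u \<longrightarrow> p (Suc i) = Some v \<longrightarrow> tr u (a i) v) \<and>
     (\<forall>i u. p i = Some u \<longrightarrow> p (Suc i) = None \<longrightarrow> (\<nexists>b v. tr u b v))"

text \<open>The sequence C, a1, C, a2, ... of a path under the trivial colouring;
  the single colour C is Inl ().\<close>

definition coloured_seq ::
  "(nat \<Rightarrow> 's option) \<Rightarrow> (nat \<Rightarrow> 'act) \<Rightarrow> nat \<Rightarrow> (unit + 'act) option" where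
  "coloured_seq p a n =
     (if even n then map_option (\<lambda>_. Inl ()) (p (n div 2))
      else (if p (Suc (n div 2)) \<noteq> None then Some (Inr (a (n div 2))) else None))"

text \<open>v is obtained from w by contracting every maximal finite block
  C,tau,C,...,tau,C and every infinite block C,tau,C,tau,... to C: h maps
  positions of w onto positions of v, staying put inside such a block.\<close>

definition tau_contract ::
  "'act \<Rightarrow> (nat \<Rightarrow> (unit + 'act) option) \<Rightarrow> (nat \<Rightarrow> (unit + 'act) option) \<Rightarrow> bool" where
  "tau_contract tau w v \<longleftrightarrow> seq_wf v \<and>
     (\<exists>h. h 0 = 0 \<and>
        (\<forall>i. w i \<noteq> None \<longrightarrow>
              v (h i) = (if w i = Some (Inr tau) then Some (Inl ()) else w i)) \<and>
        (\<forall>i. w (Suc i) \<noteq> None \<longrightarrow>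
              (if w (Suc i) = Some (Inr tau) \<or> w i = Some (Inr tau)
               then h (Suc i) = h i else h (Suc i) = Suc (h i))) \<and>
        (\<forall>k. v k \<noteq> None \<longrightarrow> (\<exists>i. w i \<noteq> None \<and> h i = k)))"

definition complete_T_traces ::
  "'act \<Rightarrow> ('s \<Rightarrow> 'act \<Rightarrow> 's \<Rightarrow> bool) \<Rightarrow> 's \<Rightarrow> (nat \<Rightarrow> (unit + 'act) option) set" where
  "complete_T_traces tau tr s =
     {v. \<exists>p a. lts_maxpath tr s p a \<and> tau_contract tau (coloured_seq p a) v}"

definition eq_T_lambda ::
  "'act \<Rightarrow> ('s \<Rightarrow> 'ap set) \<Rightarrow> ('s \<Rightarrow> 'act \<Rightarrow> 's \<Rightarrow> bool) \<Rightarrow> 's \<Rightarrow> 's \<Rightarrow> bool" where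
  "eq_T_lambda tau L tr s t \<longleftrightarrow>
     L s = L t \<and> complete_T_traces tau tr s = complete_T_traces tau tr t"

end

theory Submission
  imports Defs
begin

lemma seq_wf_None: "seq_wf w \<Longrightarrow> w i = None \<Longrightarrow> i \<le> j \<Longrightarrow> w j = None"
  unfolding seq_wf_def by blast

lemma seq_wf_SucD: "seq_wf w \<Longrightarrow> w (Suc i) \<noteq> None \<Longrightarrow> w i \<noteq> None"
  unfolding seq_wf_def by (meson le_SucI order_refl)

lemma cs_even[simp]: "coloured_seq p a (2*i) = map_option (\<lambda>_. Inl ()) (p i)"
  by (simp add: coloured_seq_def)

lemma cs_odd[simp]: "coloured_seq p a (Suc (2*i)) = (if p (Suc i) \<noteq> None then Some (Inr (a i)) else None)"
  by (simp add: coloured_seq_def)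

lemma cs_even2[simp]: "coloured_seq p a (Suc (Suc (2*i))) = map_option (\<lambda>_. Inl ()) (p (Suc i))"
  using cs_even[of p a "Suc i"] by simp

lemma parity_cases: "(\<And>i. P (2*i)) \<Longrightarrow> (\<And>i. P (Suc (2*i))) \<Longrightarrow> P n"
  by (metis oddE evenE Suc_eq_plus1)

lemma cs_None_iff: "coloured_seq p a n \<noteq> None \<longleftrightarrow> p ((n+1) div 2) \<noteq> None"
  by (rule parity_cases[of _ n]) auto

lemma seq_wf_cs: "seq_wf p \<Longrightarrow> seq_wf (coloured_seq p a)"
  unfolding seq_wf_def[of "coloured_seq p a"] cs_None_iff
  by (metis seq_wf_None div_le_mono add_le_mono1)

definition act :: "('s \<Rightarrow> 'ap set) \<Rightarrow> ('s \<Rightarrow> 'act \<Rightarrow> 's \<Rightarrow> bool) \<Rightarrow> 'ap set \<Rightarrow> 'ap set \<Rightarrow> 'act" where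
  "act L tr l l' = (SOME b. \<exists>x y. tr x b y \<and> L x = l \<and> L y = l')"

definition Phi where "Phi L tr v = coloured_seq v (\<lambda>k. act L tr (the (v k)) (the (v (Suc k))))"

lemma act_eq:
  assumes cons: "consistent tau L tr" and t: "tr x b y"
  shows "act L tr (L x) (L y) = b"
proof -
  have "\<exists>b x' y'. tr x' b y' \<and> L x' = L x \<and> L y' = L y" using t by blast
  then have "\<exists>x' y'. tr x' (act L tr (L x) (L y)) y' \<and> L x' = L x \<and> L y' = L y"
    unfolding act_def by (rule someI_ex[where P="\<lambda>b. \<exists>x' y'. tr x' b y' \<and> L x' = L x \<and> L y' = L y"]) 
  then show ?thesis using cons t unfolding consistent_def by metis
qed

lemma Phi_even[simp]: "Phi L tr v (2*k) = map_option (\<lambda>_. Inl ()) (v k)"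
  by (simp add: Phi_def)

lemma Phi_odd[simp]: "Phi L tr v (Suc (2*k)) = (if v (Suc k) \<noteq> None then Some (Inr (act L tr (the (v k)) (the (v (Suc k))))) else None)"
  by (simp add: Phi_def)

lemma stutter_step:
  assumes wf: "seq_wf w" and h0: "h 0 = 0"
  and hstep: "\<forall>i. w (Suc i) \<noteq> None \<longrightarrow> (if w (Suc i) = w i then h (Suc i) = h i else h (Suc i) = Suc (h i))"
  shows "w j \<noteq> None \<Longrightarrow> h j = Suc k \<Longrightarrow> \<exists>i. w (Suc i) \<noteq> None \<and> w (Suc i) \<noteq> w i \<and> h i = k \<and> h (Suc i) = Suc k"
proof (induction j)
  case 0 then show ?case using h0 by simp
next
  case (Suc j)
  have wj: "w j \<noteq> None" using seq_wf_SucD[OF wf Suc.prems(1)] .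
  show ?case
  proof (cases "w (Suc j) = w j")
    case True
    then have "h (Suc j) = h j" using hstep Suc.prems(1) by auto
    then show ?thesis using Suc.IH wj Suc.prems(2) by auto
  next
    case False
    then have "h (Suc j) = Suc (h j)" using hstep Suc.prems(1) by auto
    then show ?thesis using False Suc.prems by auto
  qed
qed

lemma construct:
  assumes cons: "consistent tau L tr" and P: "lts_maxpath tr s p a"
  and SC: "stutter_contract (\<lambda>i. map_option L (p i)) v"
  shows "tau_contract tau (coloured_seq p a) (Phi L tr v)"
proof -
  let ?w = "\<lambda>i. map_option L (p i)"
  from SC obtain h where wfv: "seq_wf v" and h0: "h 0 = 0" and hv: "\<forall>i. ?w i \<noteq> None \<longrightarrow> v (h i) = ?w i"
    and hs: "\<forall>i. ?w (Suc i) \<noteq> None \<longrightarrow> (if ?w (Suc i) = ?w i then h (Suc i) = h i else h (Suc i) = Suc (h i))"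
    and hsur: "\<forall>k. v k \<noteq> None \<longrightarrow> (\<exists>i. ?w i \<noteq> None \<and> h i = k)"
    unfolding stutter_contract_def by blast
  have wfp: "seq_wf p" and trp: "\<forall>i u v. p i = Some u \<longrightarrow> p (Suc i) = Some v \<longrightarrow> tr u (a i) v"
    using P unfolding lts_maxpath_def by auto
  have wfw: "seq_wf ?w" using wfp by (simp add: seq_wf_def)
  have tauiff: "tr x b y \<Longrightarrow> (L x = L y \<longleftrightarrow> b = tau)" for x b y using cons unfolding consistent_def by blast
  have step: "p (Suc i) = Some y \<Longrightarrow> \<exists>x. p i = Some x \<and> tr x (a i) y" for i y
    using seq_wf_SucD[OF wfp, of i] trp by fastforce
  define h' where "h' n = (if even n then 2 * h (n div 2) else if a (n div 2) = tau then 2 * h (n div 2) else Suc (2 * h (n div 2)))" for n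
  have h'e[simp]: "h' (2*i) = 2 * h i" for i by (simp add: h'_def)
  have h'e2[simp]: "h' (Suc (Suc (2*i))) = 2 * h (Suc i)" for i using h'e[of "Suc i"] by simp
  have h'o[simp]: "h' (Suc (2*i)) = (if a i = tau then 2 * h i else Suc (2 * h i))" for i by (simp add: h'_def)
  let ?w' = "coloured_seq p a"
  let ?u = "Phi L tr v"
  have C0: "seq_wf ?u" unfolding Phi_def by (rule seq_wf_cs[OF wfv])
  have C00: "h' 0 = 0" using h0 by (simp add: h'_def)
  have C1: "?w' n \<noteq> None \<longrightarrow> ?u (h' n) = (if ?w' n = Some (Inr tau) then Some (Inl ()) else ?w' n)" for n
  proof (rule parity_cases[of _ n])
    fix i show "?w' (2*i) \<noteq> None \<longrightarrow> ?u (h' (2*i)) = (if ?w' (2*i) = Some (Inr tau) then Some (Inl ()) else ?w' (2*i))"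
      using hv by auto
  next
    fix i show "?w' (Suc (2*i)) \<noteq> None \<longrightarrow> ?u (h' (Suc (2*i))) = (if ?w' (Suc (2*i)) = Some (Inr tau) then Some (Inl ()) else ?w' (Suc (2*i)))"
    proof
      assume "?w' (Suc (2*i)) \<noteq> None"
      then obtain y where y: "p (Suc i) = Some y" by (auto split: if_splits)
      then obtain x where x: "p i = Some x" and t: "tr x (a i) y" using step by blast
      have vi: "v (h i) = Some (L x)" using hv x by auto
      show "?u (h' (Suc (2*i))) = (if ?w' (Suc (2*i)) = Some (Inr tau) then Some (Inl ()) else ?w' (Suc (2*i)))"
      proof (cases "a i = tau")
        case True then show ?thesis using vi y by simp
      next
        case False
        then have "L x \<noteq> L y" using tauiff[OF t] by simp
        then have hS: "h (Suc i) = Suc (h i)" using hs x y by (metis option.simps(9) option.distinct(1) option.inject)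
        have vS: "v (Suc (h i)) = Some (L y)" using hv y hS by (metis option.simps(9) option.distinct(1))
        show ?thesis using False vi vS y act_eq[OF cons t] by simp
      qed
    qed
  qed
  have C2: "?w' (Suc n) \<noteq> None \<longrightarrow> (if ?w' (Suc n) = Some (Inr tau) \<or> ?w' n = Some (Inr tau) then h' (Suc n) = h' n else h' (Suc n) = Suc (h' n))" for n
  proof (rule parity_cases[of _ n])
    fix i show "?w' (Suc (2*i)) \<noteq> None \<longrightarrow> (if ?w' (Suc (2*i)) = Some (Inr tau) \<or> ?w' (2*i) = Some (Inr tau) then h' (Suc (2*i)) = h' (2*i) else h' (Suc (2*i)) = Suc (h' (2*i)))"
      by auto
  next
    fix i
    have e: "Suc (Suc (2*i)) = 2 * Suc i" by simp
    show "?w' (Suc (Suc (2*i))) \<noteq> None \<longrightarrow> (if ?w' (Suc (Suc (2*i))) = Some (Inr tau) \<or> ?w' (Suc (2*i)) = Some (Inr tau) then h' (Suc (Suc (2*i))) = h' (Suc (2*i)) else h' (Suc (Suc (2*i))) = Suc (h' (Suc (2*i))))"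
      unfolding e
    proof
      assume "?w' (2 * Suc i) \<noteq> None"
      then obtain y where y: "p (Suc i) = Some y" by auto
      then obtain x where x: "p i = Some x" and t: "tr x (a i) y" using step by blast
      show "if ?w' (2 * Suc i) = Some (Inr tau) \<or> ?w' (Suc (2*i)) = Some (Inr tau) then h' (2 * Suc i) = h' (Suc (2*i)) else h' (2 * Suc i) = Suc (h' (Suc (2*i)))"
      proof (cases "a i = tau")
        case True
        then have "L x = L y" using tauiff[OF t] by simp
        then have "h (Suc i) = h i" using hs x y by simp
        then show ?thesis using True y by simp
      next
        case False
        then have "L x \<noteq> L y" using tauiff[OF t] by simp
        then have "h (Suc i) = Suc (h i)" using hs x y by simp
        then show ?thesis using False y by simp
      qed
    qed
  qed
  have C3: "?u k \<noteq> None \<longrightarrow> (\<exists>n. ?w' n \<noteq> None \<and> h' n = k)" for k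
  proof (rule parity_cases[of _ k])
    fix m show "?u (2*m) \<noteq> None \<longrightarrow> (\<exists>n. ?w' n \<noteq> None \<and> h' n = 2*m)"
    proof
      assume "?u (2*m) \<noteq> None"
      then have "v m \<noteq> None" by simp
      then obtain i where "?w i \<noteq> None" "h i = m" using hsur by blast
      then show "\<exists>n. ?w' n \<noteq> None \<and> h' n = 2*m" by (intro exI[of _ "2*i"]) simp
    qed
  next
    fix m show "?u (Suc (2*m)) \<noteq> None \<longrightarrow> (\<exists>n. ?w' n \<noteq> None \<and> h' n = Suc (2*m))"
    proof
      assume "?u (Suc (2*m)) \<noteq> None"
      then have "v (Suc m) \<noteq> None" by (simp split: if_splits)
      then obtain j where "?w j \<noteq> None" "h j = Suc m" using hsur by blast
      then obtain i where i1: "?w (Suc i) \<noteq> None" and i2: "?w (Suc i) \<noteq> ?w i" and i3: "h i = m"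
        using stutter_step[OF wfw h0 hs] by blast
      then obtain y where y: "p (Suc i) = Some y" by auto
      then obtain x where x: "p i = Some x" and t: "tr x (a i) y" using step by blast
      have "a i \<noteq> tau" using i2 x y tauiff[OF t] by simp
      then show "\<exists>n. ?w' n \<noteq> None \<and> h' n = Suc (2*m)"
        using y i3 by (intro exI[of _ "Suc (2*i)"]) simp
    qed
  qed
  show ?thesis unfolding tau_contract_def
    using C0 C00 C1 C2 C3 by blast
qed


lemma tau_unique:
  assumes wf: "seq_wf w" and A: "tau_contract tau w u" and B: "tau_contract tau w u'"
  shows "u = u'"
proof -
  from A obtain h where h0: "h 0 = 0" and hv: "\<forall>i. w i \<noteq> None \<longrightarrow> u (h i) = (if w i = Some (Inr tau) then Some (Inl ()) else w i)"
    and hs: "\<forall>i. w (Suc i) \<noteq> None \<longrightarrow> (if w (Suc i) = Some (Inr tau) \<or> w i = Some (Inr tau) then h (Suc i) = h i else h (Suc i) = Suc (h i))"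
    and hsur: "\<forall>k. u k \<noteq> None \<longrightarrow> (\<exists>i. w i \<noteq> None \<and> h i = k)"
    unfolding tau_contract_def by blast
  from B obtain g where g0: "g 0 = 0" and gv: "\<forall>i. w i \<noteq> None \<longrightarrow> u' (g i) = (if w i = Some (Inr tau) then Some (Inl ()) else w i)"
    and gs: "\<forall>i. w (Suc i) \<noteq> None \<longrightarrow> (if w (Suc i) = Some (Inr tau) \<or> w i = Some (Inr tau) then g (Suc i) = g i else g (Suc i) = Suc (g i))"
    and gsur: "\<forall>k. u' k \<noteq> None \<longrightarrow> (\<exists>i. w i \<noteq> None \<and> g i = k)"
    unfolding tau_contract_def by blast
  have hg: "w i \<noteq> None \<Longrightarrow> h i = g i" for i
  proof (induction i)
    case 0 then show ?case using h0 g0 by simp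
  next
    case (Suc i)
    have "w i \<noteq> None" using seq_wf_SucD[OF wf Suc.prems] .
    then have "h i = g i" using Suc.IH by blast
    moreover have "if w (Suc i) = Some (Inr tau) \<or> w i = Some (Inr tau) then h (Suc i) = h i else h (Suc i) = Suc (h i)"
      using hs Suc.prems by blast
    moreover have "if w (Suc i) = Some (Inr tau) \<or> w i = Some (Inr tau) then g (Suc i) = g i else g (Suc i) = Suc (g i)"
      using gs Suc.prems by blast
    ultimately show ?case by (simp split: if_splits)
  qed
  show ?thesis
  proof
    fix k
    show "u k = u' k"
    proof (cases "u k = None \<and> u' k = None")
      case True then show ?thesis by simp
    next
      case False
      have "\<exists>i. w i \<noteq> None \<and> h i = k"
      proof (cases "u k = None")
        case True
        then have "u' k \<noteq> None" using False by simp
        then obtain i where "w i \<noteq> None" "g i = k" using gsur by blast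
        then show ?thesis using hg by auto
      next
        case False then show ?thesis using hsur by blast
      qed
      then obtain i where i: "w i \<noteq> None" "h i = k" by blast
      have "u k = (if w i = Some (Inr tau) then Some (Inl ()) else w i)" using hv i by auto
      moreover have "u' k = (if w i = Some (Inr tau) then Some (Inl ()) else w i)" using gv i hg[OF i(1)] by auto
      ultimately show ?thesis by simp
    qed
  qed
qed

lemma stutter_exists:
  assumes wf: "seq_wf w"
  shows "\<exists>v. stutter_contract w v"
proof -
  define h where "h = rec_nat (0::nat) (\<lambda>i hi. if w (Suc i) = w i then hi else Suc hi)"
  have h0: "h 0 = 0" and hS: "h (Suc i) = (if w (Suc i) = w i then h i else Suc (h i))" for i
    by (simp_all add: h_def)
  have mono: "h i \<le> h (Suc i)" for i by (simp add: hS)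
  have monoh: "i \<le> j \<Longrightarrow> h i \<le> h j" for i j using lift_Suc_mono_le[of h, OF mono] by blast
  have same0: "w (i+d) \<noteq> None \<Longrightarrow> h (i+d) = h i \<Longrightarrow> w (i+d) = w i" for i d
  proof (induction d)
    case 0 then show ?case by simp
  next
    case (Suc d)
    have wn: "w (i+d) \<noteq> None" using seq_wf_SucD[OF wf] Suc.prems(1) by simp
    have "h i \<le> h (i+d)" using monoh by simp
    moreover have "h (i+d) \<le> h (Suc (i+d))" by (rule mono)
    ultimately have e1: "h (i+d) = h i" and e2: "h (Suc (i+d)) = h (i+d)" using Suc.prems(2) by auto
    have "w (Suc (i+d)) = w (i+d)" using e2 hS[of "i+d"] by (auto split: if_splits)
    then show ?case using Suc.IH[OF wn e1] by simp
  qed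
  have same: "w i \<noteq> None \<Longrightarrow> w j \<noteq> None \<Longrightarrow> h i = h j \<Longrightarrow> w i = w j" for i j
  proof (cases "i \<le> j")
    case True then obtain d where d: "j = i + d" using le_Suc_ex[OF True] by (elim exE)
    show "w i \<noteq> None \<Longrightarrow> w j \<noteq> None \<Longrightarrow> h i = h j \<Longrightarrow> w i = w j"
      unfolding d using same0[of i d] by simp
  next
    case False then obtain d where d: "i = j + d" using le_Suc_ex[of j i] by auto
    show "w i \<noteq> None \<Longrightarrow> w j \<noteq> None \<Longrightarrow> h i = h j \<Longrightarrow> w i = w j"
      unfolding d using same0[of j d] by simp
  qed
  have ivt: "w i \<noteq> None \<Longrightarrow> j \<le> h i \<Longrightarrow> \<exists>i'. w i' \<noteq> None \<and> h i' = j" for i j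
  proof (induction i)
    case 0 then show ?case using h0 by auto
  next
    case (Suc i)
    have wn: "w i \<noteq> None" using seq_wf_SucD[OF wf] Suc.prems(1) by simp
    show ?case
    proof (cases "j \<le> h i")
      case True then show ?thesis using Suc.IH wn by blast
    next
      case False
      then have "j = h (Suc i)" using Suc.prems(2) hS[of i] by (auto split: if_splits)
      then show ?thesis using Suc.prems(1) by blast
    qed
  qed
  define v where "v k = (if \<exists>i. w i \<noteq> None \<and> h i = k then w (SOME i. w i \<noteq> None \<and> h i = k) else None)" for k
  have vS: "\<exists>i. w i \<noteq> None \<and> h i = k \<Longrightarrow> v k \<noteq> None" for k
  proof -
    assume ex: "\<exists>i. w i \<noteq> None \<and> h i = k"
    have "w (SOME i. w i \<noteq> None \<and> h i = k) \<noteq> None \<and> h (SOME i. w i \<noteq> None \<and> h i = k) = k"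
      using someI_ex[OF ex] .
    then show "v k \<noteq> None" unfolding v_def using ex by simp
  qed
  have "stutter_contract w v"
    unfolding stutter_contract_def
  proof (intro conjI exI[of _ h] allI impI)
    show "seq_wf v" unfolding seq_wf_def
    proof (intro allI impI)
      fix i j assume "j \<le> i" "v i \<noteq> None"
      then obtain i0 where "w i0 \<noteq> None" "h i0 = i" unfolding v_def by (auto split: if_splits)
      then have "\<exists>i'. w i' \<noteq> None \<and> h i' = j" using ivt[of i0 j] \<open>j \<le> i\<close> by simp
      then show "v j \<noteq> None" using vS by blast
    qed
    show "h 0 = 0" by (rule h0)
    fix i assume wi: "w i \<noteq> None"
    then have ex: "\<exists>i'. w i' \<noteq> None \<and> h i' = h i" by blast
    then have "w (SOME i'. w i' \<noteq> None \<and> h i' = h i) \<noteq> None \<and> h (SOME i'. w i' \<noteq> None \<and> h i' = h i) = h i"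
      by (rule someI_ex)
    then have "w (SOME i'. w i' \<noteq> None \<and> h i' = h i) = w i" using same[OF _ wi] by blast
    then show "v (h i) = w i" unfolding v_def using ex by simp
  next
    fix i assume "w (Suc i) \<noteq> None"
    show "if w (Suc i) = w i then h (Suc i) = h i else h (Suc i) = Suc (h i)" using hS by simp
  next
    fix k assume "v k \<noteq> None"
    then show "\<exists>i. w i \<noteq> None \<and> h i = k" unfolding v_def by (auto split: if_splits)
  qed
  then show ?thesis by blast
qed


lemma kripke_path_exists: "\<exists>p. kripke_maxpath tr s p"
proof -
  define nx where "nx u = (SOME v. ksucc tr u v)" for u
  define f where "f q = (case q of None \<Rightarrow> None | Some u \<Rightarrow> if \<exists>v. ksucc tr u v then Some (nx u) else None)" for q
  define p where "p = rec_nat (Some s) (\<lambda>i q. f q)"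
  have p0: "p 0 = Some s" unfolding p_def by simp
  have pS: "p (Suc i) = f (p i)" for i unfolding p_def by simp
  have fN: "f None = None" unfolding f_def by simp
  have pN: "p j = None \<Longrightarrow> p (j + d) = None" for j d
  proof (induction d)
    case 0 then show ?case by simp
  next
    case (Suc d) then show ?case using pS[of "j+d"] fN by simp
  qed
  have wf: "seq_wf p" unfolding seq_wf_def
  proof (intro allI impI)
    fix i j assume ji: "j \<le> (i::nat)" and pi: "p i \<noteq> None"
    obtain d where d: "i = j + d" using le_Suc_ex[OF ji] by (elim exE)
    show "p j \<noteq> None"
    proof
      assume "p j = None"
      then have "p (j + d) = None" by (rule pN)
      then have "p i = None" unfolding d .
      then show False using pi by simp
    qed
  qed
  show ?thesis unfolding kripke_maxpath_def
  proof (intro exI conjI allI impI)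
    show "seq_wf p" by (rule wf)
    show "p 0 = Some s" by (rule p0)
  next
    fix i u v assume u: "p i = Some u" and v: "p (Suc i) = Some v"
    have "f (Some u) = Some v" using pS[of i] u v by simp
    then have "\<exists>v. ksucc tr u v" "v = nx u" unfolding f_def by (auto split: if_splits)
    then show "ksucc tr u v" unfolding nx_def by (metis someI_ex)
  next
    fix i u assume u: "p i = Some u" and n: "p (Suc i) = None"
    have "f (Some u) = None" using pS[of i] u n by simp
    then show "\<nexists>v. ksucc tr u v" unfolding f_def by (simp split: if_splits)
  qed
qed

lemma lts_kripke: "lts_maxpath tr s p a \<Longrightarrow> kripke_maxpath tr s p"
  unfolding lts_maxpath_def kripke_maxpath_def ksucc_def by blast

lemma kripke_lts:
  assumes K: "kripke_maxpath tr s p" shows "\<exists>a. lts_maxpath tr s p a"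
proof -
  define a where "a i = (SOME b. tr (the (p i)) b (the (p (Suc i))))" for i
  have "lts_maxpath tr s p a" unfolding lts_maxpath_def
  proof (intro conjI allI impI)
    show "seq_wf p" "p 0 = Some s" using K unfolding kripke_maxpath_def by blast+
  next
    fix i u v assume u: "p i = Some u" and v: "p (Suc i) = Some v"
    then have "\<exists>b. tr u b v" using K unfolding kripke_maxpath_def ksucc_def by blast
    then have "tr u (SOME b. tr u b v) v" by (rule someI_ex)
    then show "tr u (a i) v" unfolding a_def using u v by simp
  next
    fix i u assume "p i = Some u" "p (Suc i) = None"
    then show "\<nexists>b v. tr u b v" using K unfolding kripke_maxpath_def ksucc_def by blast
  qed
  then show ?thesis by blast
qed

lemma kripke_wf: "kripke_maxpath tr s p \<Longrightarrow> seq_wf (\<lambda>i. map_option L (p i))"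
  unfolding kripke_maxpath_def seq_wf_def by simp

lemma LT_nonempty: "\<exists>v. v \<in> label_traces L tr s"
proof -
  obtain p where P: "kripke_maxpath tr s p" using kripke_path_exists[of tr s] by blast
  obtain v where "stutter_contract (\<lambda>i. map_option L (p i)) v"
    using stutter_exists[OF kripke_wf[OF P]] by blast
  then show ?thesis using P unfolding label_traces_def by blast
qed

lemma LT_start:
  assumes "v \<in> label_traces L tr s" shows "v 0 = Some (L s)"
proof -
  obtain p where P: "kripke_maxpath tr s p" and SC: "stutter_contract (\<lambda>i. map_option L (p i)) v"
    using assms unfolding label_traces_def by blast
  from SC obtain h where h0: "h 0 = 0" and hv: "\<forall>i. map_option L (p i) \<noteq> None \<longrightarrow> v (h i) = map_option L (p i)"
    unfolding stutter_contract_def by blast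
  have "p 0 = Some s" using P unfolding kripke_maxpath_def by blast
  then show ?thesis using hv[rule_format, of 0] h0 by simp
qed

lemma LT_realized:
  assumes "v \<in> label_traces L tr s" "v (Suc k) \<noteq> None"
  shows "\<exists>x b y. tr x b y \<and> v k = Some (L x) \<and> v (Suc k) = Some (L y)"
proof -
  obtain p where P: "kripke_maxpath tr s p" and SC: "stutter_contract (\<lambda>i. map_option L (p i)) v"
    using assms(1) unfolding label_traces_def by blast
  let ?w = "\<lambda>i. map_option L (p i)"
  from SC obtain h where h0: "h 0 = 0" and hv: "\<forall>i. ?w i \<noteq> None \<longrightarrow> v (h i) = ?w i"
    and hs: "\<forall>i. ?w (Suc i) \<noteq> None \<longrightarrow> (if ?w (Suc i) = ?w i then h (Suc i) = h i else h (Suc i) = Suc (h i))"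
    and hsur: "\<forall>k. v k \<noteq> None \<longrightarrow> (\<exists>i. ?w i \<noteq> None \<and> h i = k)"
    unfolding stutter_contract_def by blast
  obtain j where "?w j \<noteq> None" "h j = Suc k" using hsur assms(2) by blast
  then obtain i where i1: "?w (Suc i) \<noteq> None" and i3: "h i = k" and i4: "h (Suc i) = Suc k"
    using stutter_step[OF kripke_wf[OF P] h0 hs] by blast
  have wfp: "seq_wf p" using P unfolding kripke_maxpath_def by blast
  obtain y where y: "p (Suc i) = Some y" using i1 by auto
  obtain x where x: "p i = Some x" using seq_wf_SucD[OF wfp, of i] y by auto
  have "ksucc tr x y" using P x y unfolding kripke_maxpath_def by blast
  then obtain b where "tr x b y" unfolding ksucc_def by blast
  moreover have "v k = Some (L x)" using hv[rule_format, of i] x i3 by simp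
  moreover have "v (Suc k) = Some (L y)" using hv[rule_format, of "Suc i"] y i4 by simp
  ultimately show ?thesis by blast
qed

lemma CT_eq:
  assumes cons: "consistent tau L tr"
  shows "complete_T_traces tau tr s = Phi L tr ` label_traces L tr s"
proof
  show "complete_T_traces tau tr s \<subseteq> Phi L tr ` label_traces L tr s"
  proof
    fix u assume "u \<in> complete_T_traces tau tr s"
    then obtain p a where P: "lts_maxpath tr s p a" and T: "tau_contract tau (coloured_seq p a) u"
      unfolding complete_T_traces_def by blast
    have K: "kripke_maxpath tr s p" using lts_kripke[OF P] .
    obtain v where SC: "stutter_contract (\<lambda>i. map_option L (p i)) v"
      using stutter_exists[OF kripke_wf[OF K]] by blast
    have wfp: "seq_wf p" using P unfolding lts_maxpath_def by blast
    have u: "u = Phi L tr v" using tau_unique[OF seq_wf_cs[OF wfp] T construct[OF cons P SC]] .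
    have "v \<in> label_traces L tr s" unfolding label_traces_def using K SC by (intro CollectI exI conjI)
    then show "u \<in> Phi L tr ` label_traces L tr s" unfolding u by (rule imageI)
  qed
next
  show "Phi L tr ` label_traces L tr s \<subseteq> complete_T_traces tau tr s"
  proof
    fix u assume "u \<in> Phi L tr ` label_traces L tr s"
    then obtain v where u: "u = Phi L tr v" and v: "v \<in> label_traces L tr s" by (rule imageE)
    from v obtain p where K: "kripke_maxpath tr s p"
      and SC: "stutter_contract (\<lambda>i. map_option L (p i)) v"
      unfolding label_traces_def by (rule CollectE) (elim exE conjE)
    obtain a where P: "lts_maxpath tr s p a" using kripke_lts[OF K] by (elim exE)
    have T: "tau_contract tau (coloured_seq p a) u" unfolding u by (rule construct[OF cons P SC])
    show "u \<in> complete_T_traces tau tr s"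
      unfolding complete_T_traces_def using P T by (intro CollectI exI conjI)
  qed
qed

lemma Phi_inj:
  assumes cons: "consistent tau L tr"
  and v: "v \<in> label_traces L tr s" and v': "v' \<in> label_traces L tr t"
  and Lst: "L s = L t" and eq: "Phi L tr v = Phi L tr v'"
  shows "v = v'"
proof
  have dom: "v k = None \<longleftrightarrow> v' k = None" for k
    using arg_cong[OF eq, of "\<lambda>f. f (2*k)"] by (cases "v k"; cases "v' k") auto
  fix k show "v k = v' k"
  proof (induction k)
    case 0 then show ?case using LT_start[OF v] LT_start[OF v'] Lst by simp
  next
    case (Suc k)
    show ?case
    proof (cases "v (Suc k) = None")
      case True then show ?thesis using dom by simp
    next
      case False
      then have F': "v' (Suc k) \<noteq> None" using dom by simp
      obtain x b y where t: "tr x b y" and vx: "v k = Some (L x)" and vy: "v (Suc k) = Some (L y)"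
        using LT_realized[OF v False] by blast
      obtain x' b' y' where t': "tr x' b' y'" and vx': "v' k = Some (L x')" and vy': "v' (Suc k) = Some (L y')"
        using LT_realized[OF v' F'] by blast
      have "act L tr (L x) (L y) = act L tr (L x') (L y')"
        using arg_cong[OF eq, of "\<lambda>f. f (Suc (2*k))"] vx vy vx' vy' by simp
      then have "b = b'" using act_eq[OF cons t] act_eq[OF cons t'] by simp
      moreover have "L x = L x'" using Suc.IH vx vx' by simp
      ultimately have "L y = L y'" using cons t t' unfolding consistent_def by blast
      then show ?thesis using vy vy' by simp
    qed
  qed
qed

theorem theorem9p2:
  fixes tau :: 'act and L :: "'s \<Rightarrow> 'ap set" and tr :: "'s \<Rightarrow> 'act \<Rightarrow> 's \<Rightarrow> bool"
  assumes "consistent tau L tr"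
  shows "\<forall>s t. approx_L L tr s t \<longleftrightarrow> eq_T_lambda tau L tr s t"
proof (intro allI iffI)
  fix s t
  assume A: "approx_L L tr s t"
  then have E: "label_traces L tr s = label_traces L tr t" unfolding approx_L_def .
  obtain v where v: "v \<in> label_traces L tr s" using LT_nonempty[of L tr s] by blast
  have "L s = L t" using LT_start[OF v] LT_start[of v L tr t] v E by simp
  then show "eq_T_lambda tau L tr s t"
    unfolding eq_T_lambda_def using CT_eq[OF assms] E by simp
next
  fix s t
  assume B: "eq_T_lambda tau L tr s t"
  then have Lst: "L s = L t" and C: "Phi L tr ` label_traces L tr s = Phi L tr ` label_traces L tr t"
    unfolding eq_T_lambda_def using CT_eq[OF assms] by auto
  have sub: "label_traces L tr s1 \<subseteq> label_traces L tr t1"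
    if "L s1 = L t1" "Phi L tr ` label_traces L tr s1 = Phi L tr ` label_traces L tr t1" for s1 t1
  proof
    fix v assume v: "v \<in> label_traces L tr s1"
    then have "Phi L tr v \<in> Phi L tr ` label_traces L tr t1" using that(2) by blast
    then obtain v' where v': "v' \<in> label_traces L tr t1" "Phi L tr v = Phi L tr v'" by blast
    then have "v = v'" using Phi_inj[OF assms v v'(1) that(1) v'(2)] by simp
    then show "v \<in> label_traces L tr t1" using v' by simp
  qed
  show "approx_L L tr s t" unfolding approx_L_def
    using sub[OF Lst C] sub[OF Lst[symmetric] C[symmetric]] by blast
qed

end
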